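(* Let $s_{1}, s_{2}, p_{1}, p_{2}, m, k \in \mathbb N$ with $m \geq s_{1}+s_{2}-1$. Then \begin{align*} \sum_{n=1}^\infty\frac{(-1)^{n+1}H_n^{(p_{1},s_{1})}H_n^{(p_{2},s_{2})}}{n^{m}\binom{n+k}{k}} &=\sum_{\ell_{1}=0}^{s_{1}-1}\sum_{t_{1}=0}^{s_{1}-1-\ell_{1}} \sum_{\ell_{2}=0}^{s_{2}-1}\sum_{t_{2}=0}^{s_{2}-1-\ell_{2}}a(s_{1},\ell_{1},t_{1})a(s_{2},\ell_{2},t_{2})\\ &\quad \times \sum_{r=1}^{k}(-1)^{r+1} r \binom{k}{r}\, T(p_{1}-\ell_{1},p_{2}-\ell_{2},m-t_{1}-t_{2},1,r,1)\,, \end{align*} where $T(q_1,q_2,u,1,r,1)=\sum_{n=1}^\infty\frac{(-1)^{n+1}H_n^{(q_{1})}H_n^{(q_{2})}}{n^{u}(n+r)}$. Consequently this sum can be expressed in terms of classical (alternating) Euler sums, zeta values and generalized (alternating) harmonic numbers.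
   Context: $\mathbb N=\{1,2,\dots\}$. For $n\in\mathbb N_0$ and $q\in\mathbb N$, $H_n^{(q)}=\sum_{j=1}^n j^{-q}$; for an integer $q\ge 0$, $H_n^{(-q)}$ denotes $\sum_{\ell=1}^n \ell^{q}$ (so $H_n^{(0)}=n$). Generalized hyperharmonic numbers: $H_n^{(p,1)}=H_n^{(p)}$, $H_n^{(p,r)}=\sum_{j=1}^n H_j^{(p,r-1)}$ for $r\ge2$. For $q_1,q_2\in\mathbb Z$, $u\in\mathbb N_0$, $r\in\mathbb N$, $T(q_{1},q_{2},u,1,r,1):=\sum_{n=1}^\infty\frac{(-1)^{n+1}H_n^{(q_{1})}H_n^{(q_{2})}}{n^{u}(n+r)}$. Bernoulli numbers $B_j^{+}$: $\frac{x}{1-e^{-x}}=\sum_{j\ge0}B_j^{+}\frac{x^j}{j!}$. The rational coefficients $a(r,m,j)$ ($r\in\mathbb N$, $0\le m\le r-1$, $0\le j\le r-1-m$) are defined by $a(1,0,0)=1$ and, for $r\ge1$: $a(r+1,r,0)=-\sum_{m=0}^{r-1} \frac{a(r,m,r-m-1)}{r-m}$; $a(r+1,m,\ell)=\sum_{j=\ell-1}^{r-1-m} \frac{a(r,m,j)}{j+1} \binom{j+1}{j-\ell+1}B_{j-\ell+1}^{+}$ for $0\leq m \leq r-1$, $1\leq \ell \leq r-m$; $a(r+1,m,0)=-\sum_{y=0}^{m} \sum_{j=\max\{0, m-y-1\}}^{r-1-y}a(r,y,j)D(r,m,j,y)$ for $0\leq m \leq r-1$, where $D(r,m,j,y)=\sum_{\ell=\max\{0,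 m-y-1\}}^{j} \frac{1}{j+1} \binom{j+1}{j-\ell}B_{j-\ell}^{+}\binom{\ell+1}{m-y}(-1)^{1+\ell-m+y}$. (These satisfy the known identity $H_n^{(p,r)}=\sum_{m=0}^{r-1}\sum_{j=0}^{r-1-m}a(r,m,j)n^jH_n^{(p-m)}$ for all $n,p\in\mathbb N$.) *)

theory Defs
  imports "HOL-Analysis.Analysis" "HOL-Computational_Algebra.Formal_Power_Series"
begin

definition bernoulli_plus :: "nat \<Rightarrow> real" where
  "bernoulli_plus j = fact j * fps_nth (fps_X / (1 - fps_exp (-1))) j"

definition harm :: "int \<Rightarrow> nat \<Rightarrow> real" where
  "harm q n = (\<Sum>j=1..n. (real j) powi (- q))"

fun hyperharm :: "nat \<Rightarrow> nat \<Rightarrow> nat \<Rightarrow> real" where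
  "hyperharm p 0 n = 0"
| "hyperharm p (Suc 0) n = harm (int p) n"
| "hyperharm p (Suc (Suc r)) n = (\<Sum>j=1..n. hyperharm p (Suc r) j)"

definition Dcoef :: "nat \<Rightarrow> nat \<Rightarrow> nat \<Rightarrow> nat \<Rightarrow> real" where
  "Dcoef r m j y = (\<Sum>l = m - y - 1 .. j.
      1 / real (j + 1) * real ((j + 1) choose (j - l)) * bernoulli_plus (j - l)
      * real ((l + 1) choose (m - y)) * (-1) ^ (1 + l + y - m))"

text \<open>The coefficients a(r,m,j); set to 0 outside their domain
  (r >= 1, m <= r-1, j <= r-1-m).\<close>
fun acoef :: "nat \<Rightarrow> nat \<Rightarrow> nat \<Rightarrow> real" where
  "acoef 0 m l = 0"
| "acoef (Suc 0) m l = (if m = 0 \<and> l = 0 then 1 else 0)"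
| "acoef (Suc (Suc r)) m l =
     (if m = Suc r \<and> l = 0 then
        - (\<Sum>mm < Suc r. acoef (Suc r) mm (Suc r - mm - 1) / real (Suc r - mm))
      else if m < Suc r \<and> 1 \<le> l \<and> l \<le> Suc r - m then
        (\<Sum>j = l - 1 .. Suc r - 1 - m. acoef (Suc r) m j / real (j + 1)
            * real ((j + 1) choose (j + 1 - l)) * bernoulli_plus (j + 1 - l))
      else if m < Suc r \<and> l = 0 then
        - (\<Sum>y = 0 .. m. \<Sum>j = m - y - 1 .. Suc r - 1 - y.
              acoef (Suc r) y j * Dcoef (Suc r) m j y)
      else 0)"

definition Tsum :: "int \<Rightarrow> int \<Rightarrow> nat \<Rightarrow> nat \<Rightarrow> real" where
  "Tsum q1 q2 u r = (\<Sum>n. (-1) ^ (Suc n + 1) * harm q1 (Suc n) * harm q2 (Suc n)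
                          / (real (Suc n) ^ u * real (Suc n + r)))"

end

theory Submission
  imports Defs
begin


definition Bp :: "real fps" where "Bp = fps_X / (1 - fps_exp (-1))"

lemma Bp_eq: "Bp * (1 - fps_exp (-1)) = fps_X"
proof -
  have ne: "(1 - fps_exp (-1::real)) \<noteq> 0"
  proof
    assume "(1 - fps_exp (-1::real)) = 0"
    then have "fps_nth (1 - fps_exp (-1::real)) 1 = 0" by simp
    then show False by simp
  qed
  have "subdegree (1 - fps_exp (-1::real)) \<le> 1"
    by (rule subdegree_leI) simp
  then have "subdegree (1 - fps_exp (-1::real)) \<le> subdegree (fps_X :: real fps)" by simp
  then show ?thesis unfolding Bp_def using fps_times_divide_eq[OF ne] by simp
qed

lemma Bp_nth: "bernoulli_plus j = fact j * fps_nth Bp j"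
  by (simp add: bernoulli_plus_def Bp_def)

lemma fps_faul: "Bp * (fps_exp (real n) - 1) = fps_X * (\<Sum>k=1..n. fps_exp (real k))"
proof (induction n)
  case 0 then show ?case by simp
next
  case (Suc n)
  have e: "fps_exp (real (Suc n)) - fps_exp (real n) = fps_exp (real (Suc n)) * (1 - fps_exp (-1))"
    by (simp add: algebra_simps fps_exp_add_mult[symmetric])
  have "Bp * (fps_exp (real (Suc n)) - 1) = Bp * (fps_exp (real n) - 1) + Bp * (fps_exp (real (Suc n)) - fps_exp (real n))"
    by (simp add: algebra_simps)
  also have "Bp * (fps_exp (real (Suc n)) - fps_exp (real n)) = fps_X * fps_exp (real (Suc n))"
  proof -
    have "Bp * (fps_exp (real (Suc n)) * (1 - fps_exp (-1))) = (Bp * (1 - fps_exp (-1))) * fps_exp (real (Suc n))"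
      by (simp only: ac_simps)
    then show ?thesis unfolding e Bp_eq by (simp add: ac_simps)
  qed
  finally show ?case using Suc by (simp add: algebra_simps)
qed

lemma faulhaber:
  "(\<Sum>k=1..n. real k ^ j) = (\<Sum>l=0..j. 1 / real (j+1) * real ((j+1) choose (j-l)) * bernoulli_plus (j-l) * real n ^ (l+1))"
proof -
  have "fps_nth (Bp * (fps_exp (real n) - 1)) (Suc j) = fps_nth (fps_X * (\<Sum>k=1..n. fps_exp (real k))) (Suc j)"
    using fps_faul by simp
  also have "\<dots> = (\<Sum>k=1..n. real k ^ j / fact j)"
    by (simp add: fps_sum_nth)
  finally have 1: "(\<Sum>i=0..Suc j. fps_nth Bp i * fps_nth (fps_exp (real n) - 1) (Suc j - i)) = (\<Sum>k=1..n. real k ^ j / fact j)"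
    by (simp add: fps_mult_nth)
  have "(\<Sum>i=0..Suc j. fps_nth Bp i * fps_nth (fps_exp (real n) - 1) (Suc j - i)) = (\<Sum>i=0..j. fps_nth Bp i * (real n ^ (Suc j - i) / fact (Suc j - i)))"
    by (simp add: sum.atLeast0_atMost_Suc)
  also have "\<dots> = (\<Sum>l=0..j. fps_nth Bp (j - l) * (real n ^ (Suc l) / fact (Suc l)))"
    by (rule sum.reindex_bij_witness[of _ "\<lambda>l. j - l" "\<lambda>i. j - i"]) (auto simp: Suc_diff_le)
  finally have 2: "(\<Sum>k=1..n. real k ^ j) = fact j * (\<Sum>l=0..j. fps_nth Bp (j - l) * (real n ^ (Suc l) / fact (Suc l)))"
    using 1 by (simp add: sum_divide_distrib[symmetric])
  show ?thesis unfolding 2 sum_distrib_left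
  proof (rule sum.cong[OF refl])
    fix l assume "l \<in> {0..j}"
    then have lj: "l \<le> j" by simp
    have f: "fact (j - l) * fact (Suc l) * real ((j+1) choose (j-l)) = fact (j+1)"
      using binomial_fact_lemma[of "j-l" "j+1"] lj
      by (metis Suc_diff_le Suc_eq_plus1 diff_diff_cancel diff_le_self le_SucI of_nat_fact of_nat_mult)
    have "fact j * (fps_nth Bp (j - l) * (real n ^ Suc l / fact (Suc l)))
        = fps_nth Bp (j-l) * real n ^ Suc l * (fact j / fact (Suc l))" by simp
    also have "fact j / fact (Suc l) = (1 / real (j+1) * real ((j+1) choose (j-l))) * fact (j-l)"
      using f by (simp add: field_simps del: of_nat_Suc)
    finally show "fact j * (fps_nth Bp (j - l) * (real n ^ Suc l / fact (Suc l)))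
        = 1 / real (j+1) * real ((j+1) choose (j-l)) * bernoulli_plus (j-l) * real n ^ (l+1)"
      by (simp add: Bp_nth)
  qed
qed


definition cc :: "nat \<Rightarrow> nat \<Rightarrow> real" where
  "cc j l = 1 / real (j+1) * real ((j+1) choose (j-l)) * bernoulli_plus (j-l)"

definition SS :: "nat \<Rightarrow> real \<Rightarrow> real" where
  "SS j x = (\<Sum>l=0..j. cc j l * x ^ (l+1))"

lemma SS_faul: "SS j (real n) = (\<Sum>k=1..n. real k ^ j)"
  unfolding SS_def cc_def faulhaber by simp

lemma sumpow_harm1:
  "(\<Sum>i=1..n. real i ^ j * harm q i) = (\<Sum>k=1..n. real k powi (-q) * (SS j (real n) - SS j (real k - 1)))"
proof (induction n)
  case 0 then show ?case by simp
next
  case (Suc n)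
  have d: "SS j (real (Suc n)) - SS j (real n) = real (Suc n) ^ j"
    unfolding SS_faul by simp
  have "(\<Sum>k=1..Suc n. real k powi (-q) * (SS j (real (Suc n)) - SS j (real k - 1)))
     = (\<Sum>k=1..n. real k powi (-q) * (SS j (real n) - SS j (real k - 1)))
       + (\<Sum>k=1..n. real k powi (-q)) * (SS j (real (Suc n)) - SS j (real n))
       + real (Suc n) powi (-q) * (SS j (real (Suc n)) - SS j (real n))"
  proof -
    let ?f = "\<lambda>k. real k powi (-q)" and ?X = "SS j (real (Suc n))" and ?S = "SS j (real n)"
    have e1: "?f k * (?X - SS j (real k - 1)) = ?f k * (?S - SS j (real k - 1)) + ?f k * (?X - ?S)" for k
      by algebra
    have "(\<Sum>k=1..Suc n. ?f k * (?X - SS j (real k - 1))) = (\<Sum>k=1..n. ?f k * (?X - SS j (real k - 1))) + ?f (Suc n) * (?X - SS j (real (Suc n) - 1))"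
      by simp
    also have "(\<Sum>k=1..n. ?f k * (?X - SS j (real k - 1))) = (\<Sum>k=1..n. ?f k * (?S - SS j (real k - 1))) + (\<Sum>k=1..n. ?f k) * (?X - ?S)"
      by (simp only: e1 sum.distrib sum_distrib_right)
    finally show ?thesis by simp
  qed
  also have "\<dots> = (\<Sum>i=1..n. real i ^ j * harm q i) + real (Suc n) ^ j * harm q (Suc n)"
  proof -
    have h: "harm q (Suc n) = harm q n + real (Suc n) powi (-q)" by (simp add: harm_def)
    show ?thesis unfolding d Suc.IH[symmetric] h by (simp add: algebra_simps harm_def)
  qed
  finally show ?case by simp
qed

lemma powi_mult_pow: "(x::real) \<noteq> 0 \<Longrightarrow> x powi (- (q - int e)) = x powi (-q) * x ^ e"
proof -
  assume x: "x \<noteq> 0"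
  have "x powi (- (q - int e)) = x powi (-q + int e)" by simp
  also have "\<dots> = x powi (-q) * x powi (int e)" using x by (rule power_int_add[of x "-q" "int e", OF disjI1])
  finally show ?thesis by simp
qed

lemma sumpow_harm2:
  "(\<Sum>k=1..n. real k powi (-q) * SS j (real k - 1))
   = (\<Sum>l=0..j. \<Sum>e=0..l+1. cc j l * real ((l+1) choose e) * (-1) ^ (l+1-e) * harm (q - int e) n)"
proof -
  have "real k powi (-q) * SS j (real k - 1)
      = (\<Sum>l=0..j. \<Sum>e=0..l+1. cc j l * real ((l+1) choose e) * (-1) ^ (l+1-e) * real k powi (- (q - int e)))"
    if k: "k \<in> {1..n}" for k
  proof -
    have kz: "real k \<noteq> 0" using k by simp
    have "SS j (real k - 1) = (\<Sum>l=0..j. cc j l * (\<Sum>e\<le>l+1. real ((l+1) choose e) * real k ^ e * (-1) ^ (l+1-e)))"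
    proof -
      have bin: "(real k - 1) ^ N = (\<Sum>e\<le>N. real (N choose e) * real k ^ e * (-1) ^ (N-e))" for N
        using binomial_ring[of "real k" "-1" N] by simp
      show ?thesis unfolding SS_def bin ..
    qed
    then have "real k powi (-q) * SS j (real k - 1) = (\<Sum>l=0..j. \<Sum>e\<le>l+1. real k powi (-q) * (cc j l * (real ((l+1) choose e) * real k ^ e * (-1) ^ (l+1-e))))"
      by (simp only: sum_distrib_left)
    also have "\<dots> = (\<Sum>l=0..j. \<Sum>e=0..l+1. cc j l * real ((l+1) choose e) * (-1) ^ (l+1-e) * real k powi (- (q - int e)))"
      unfolding powi_mult_pow[OF kz] atLeast0AtMost
      by (rule sum.cong[OF refl], rule sum.cong[OF refl]) (simp only: ac_simps)
    finally show ?thesis .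
  qed
  then have "(\<Sum>k=1..n. real k powi (-q) * SS j (real k - 1))
     = (\<Sum>k=1..n. \<Sum>l=0..j. \<Sum>e=0..l+1. cc j l * real ((l+1) choose e) * (-1) ^ (l+1-e) * real k powi (- (q - int e)))"
    by (rule sum.cong[OF refl])
  also have "\<dots> = (\<Sum>l=0..j. \<Sum>k=1..n. \<Sum>e=0..l+1. cc j l * real ((l+1) choose e) * (-1) ^ (l+1-e) * real k powi (- (q - int e)))"
    by (rule sum.swap)
  also have "\<dots> = (\<Sum>l=0..j. \<Sum>e=0..l+1. \<Sum>k=1..n. cc j l * real ((l+1) choose e) * (-1) ^ (l+1-e) * real k powi (- (q - int e)))"
    by (rule sum.cong[OF refl], rule sum.swap)
  also have "\<dots> = (\<Sum>l=0..j. \<Sum>e=0..l+1. cc j l * real ((l+1) choose e) * (-1) ^ (l+1-e) * harm (q - int e) n)"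
    by (simp add: harm_def sum_distrib_left)
  finally show ?thesis .
qed

lemma sumpow_harm:
  "(\<Sum>i=1..n. real i ^ j * harm q i)
   = (\<Sum>l=0..j. cc j l * real n ^ (l+1) * harm q n)
     - (\<Sum>l=0..j. \<Sum>e=0..l+1. cc j l * real ((l+1) choose e) * (-1) ^ (l+1-e) * harm (q - int e) n)"
proof -
  have "(\<Sum>i=1..n. real i ^ j * harm q i) = SS j (real n) * harm q n - (\<Sum>k=1..n. real k powi (-q) * SS j (real k - 1))"
    unfolding sumpow_harm1 by (simp add: algebra_simps sum_subtractf sum_distrib_left sum_distrib_right harm_def)
  then show ?thesis unfolding sumpow_harm2 by (simp add: SS_def sum_distrib_right)
qed


lemma acoef_vanish: "r \<le> m + j \<Longrightarrow> acoef r m j = 0"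
proof (cases r)
  case 0 then show ?thesis by simp
next
  case (Suc R)
  assume a: "r \<le> m + j"
  show ?thesis
  proof (cases R)
    case 0 then show ?thesis using Suc a by auto
  next
    case (Suc R')
    then show ?thesis using \<open>r = Suc R\<close> a by auto
  qed
qed

lemma acoef_rec_top: "1 \<le> r \<Longrightarrow> acoef (Suc r) r 0 = -(\<Sum>mm<r. acoef r mm (r - mm - 1) / real (r - mm))"
  by (cases r) auto

lemma acoef_rec_pos: "1 \<le> r \<Longrightarrow> M < r \<Longrightarrow> 1 \<le> L \<Longrightarrow> L \<le> r - M \<Longrightarrow>
  acoef (Suc r) M L = (\<Sum>j=L-1..r-1-M. acoef r M j / real (j+1) * real ((j+1) choose (j+1-L)) * bernoulli_plus (j+1-L))"
  by (cases r) auto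

lemma acoef_rec_zero: "1 \<le> r \<Longrightarrow> M < r \<Longrightarrow>
  acoef (Suc r) M 0 = -(\<Sum>y=0..M. \<Sum>j=M-y-1..r-1-y. acoef r y j * Dcoef r M j y)"
  by (cases r) auto

lemma bp0: "bernoulli_plus 0 = 1"
proof -
  have "fps_nth (Bp * (1 - fps_exp (-1))) 1 = 1" using Bp_eq by simp
  then show ?thesis by (simp add: Bp_nth fps_mult_nth)
qed


lemma coef_pos: assumes r: "1 \<le> r" and M: "M < r" and l: "l < r"
  shows "acoef (Suc r) M (Suc l) = (\<Sum>j<r. if l \<le> j then acoef r M j * cc j l else 0)"
proof (cases "Suc l \<le> r - M")
  case True
  have "acoef (Suc r) M (Suc l) = (\<Sum>j=l..r-1-M. acoef r M j * cc j l)"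
    unfolding acoef_rec_pos[OF r M _ True, simplified] cc_def
    by (simp add: ac_simps)
  also have "\<dots> = (\<Sum>j<r. if l \<le> j then acoef r M j * cc j l else 0)"
    using M by (intro sum.mono_neutral_cong_left) (auto simp: acoef_vanish)
  finally show ?thesis .
next
  case False
  then have "acoef (Suc r) M (Suc l) = 0" by (intro acoef_vanish) simp
  moreover have "(\<Sum>j<r. if l \<le> j then acoef r M j * cc j l else 0) = 0"
    using False by (intro sum.neutral) (auto simp: acoef_vanish)
  ultimately show ?thesis by simp
qed

lemma coef_top: assumes r: "1 \<le> r"
  shows "acoef (Suc r) r 0 = - (\<Sum>m<r. \<Sum>j<r. \<Sum>l=0..j. if m \<le> r then acoef r m j * cc j l * real ((l+1) choose (r-m)) * (-1) ^ (l+1-(r-m)) else 0)"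
proof -
  have t: "(if m \<le> r then acoef r m j * cc j l * real ((l+1) choose (r-m)) * (-1) ^ (l+1-(r-m)) else 0)
      = (if j = r - 1 - m then (if l = j then acoef r m j / real (r - m) else 0) else 0)"
    if m: "m < r" and j: "j < r" and lj: "l \<le> j" for m j l
  proof (cases "m + j < r")
    case False then show ?thesis by (auto simp: acoef_vanish)
  next
    case True
    show ?thesis
    proof (cases "j = r - 1 - m \<and> l = j")
      case True
      then have "l + 1 = r - m" using m by simp
      then show ?thesis using True m by (simp add: cc_def bp0)
    next
      case False
      then have "l + 1 < r - m" using True lj by auto
      then show ?thesis using False by auto
    qed
  qed
  have "(\<Sum>m<r. \<Sum>j<r. \<Sum>l=0..j. if m \<le> r then acoef r m j * cc j l * real ((l+1) choose (r-m)) * (-1) ^ (l+1-(r-m)) else 0)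
     = (\<Sum>m<r. \<Sum>j<r. \<Sum>l=0..j. (if j = r - 1 - m then (if l = j then acoef r m j / real (r - m) else 0) else 0))"
    by (intro sum.cong refl, rule t) auto
  also have "\<dots> = (\<Sum>m<r. acoef r m (r - 1 - m) / real (r - m))"
  proof (intro sum.cong refl)
    fix m assume m: "m \<in> {..<r}"
    have i: "(\<Sum>l=0..j. (if j = r - 1 - m then (if l = j then acoef r m j / real (r - m) else 0) else 0))
        = (if j = r - 1 - m then acoef r m j / real (r - m) else 0)" for j
      by (cases "j = r - 1 - m") simp_all
    show "(\<Sum>j<r. \<Sum>l=0..j. (if j = r - 1 - m then (if l = j then acoef r m j / real (r - m) else 0) else 0))
        = acoef r m (r - 1 - m) / real (r - m)"
      unfolding i using m by (simp add: sum.delta')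
  qed
  finally show ?thesis using acoef_rec_top[OF r] by simp
qed


definition WW :: "nat \<Rightarrow> nat \<Rightarrow> real" where
  "WW r M = (\<Sum>m<r. \<Sum>j<r. \<Sum>l=0..j. if m \<le> M then acoef r m j * cc j l * real ((l+1) choose (M-m)) * (-1) ^ (l+1-(M-m)) else 0)"

lemma coef_low: assumes r: "1 \<le> r" and M: "M < r"
  shows "acoef (Suc r) M 0 = - WW r M"
proof -
  have inner: "(\<Sum>j<r. \<Sum>l=0..j. acoef r m j * cc j l * real ((l+1) choose (M-m)) * (-1) ^ (l+1-(M-m)))
      = (\<Sum>j=M-m-1..r-1-m. acoef r m j * Dcoef r M j m)" if m: "m \<le> M" for m
  proof (rule sum.mono_neutral_cong_right)
    show "finite {..<r}" by simp
    show "{M - m - 1..r - 1 - m} \<subseteq> {..<r}" using r by auto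
    show "\<forall>j\<in>{..<r} - {M - m - 1..r - 1 - m}. (\<Sum>l=0..j. acoef r m j * cc j l * real ((l+1) choose (M-m)) * (-1) ^ (l+1-(M-m))) = 0"
    proof
      fix j assume j: "j \<in> {..<r} - {M - m - 1..r - 1 - m}"
      show "(\<Sum>l=0..j. acoef r m j * cc j l * real ((l+1) choose (M-m)) * (-1) ^ (l+1-(M-m))) = 0"
      proof (cases "r \<le> m + j")
        case True then show ?thesis by (simp add: acoef_vanish)
      next
        case False
        then have "j < M - m - 1" using j by auto
        then show ?thesis by (intro sum.neutral) auto
      qed
    qed
    fix j assume j: "j \<in> {M - m - 1..r - 1 - m}"
    show "(\<Sum>l=0..j. acoef r m j * cc j l * real ((l+1) choose (M-m)) * (-1) ^ (l+1-(M-m)))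
        = acoef r m j * Dcoef r M j m"
      unfolding Dcoef_def sum_distrib_left
    proof (rule sum.mono_neutral_cong_right)
      show "finite {0..j}" by simp
      show "{M - m - 1..j} \<subseteq> {0..j}" by auto
      show "\<forall>l\<in>{0..j} - {M - m - 1..j}. acoef r m j * cc j l * real ((l+1) choose (M-m)) * (-1) ^ (l+1-(M-m)) = 0"
        by auto
      fix l assume l: "l \<in> {M - m - 1..j}"
      then have e: "l + 1 - (M - m) = 1 + l + m - M" using m by auto
      show "acoef r m j * cc j l * real ((l+1) choose (M-m)) * (-1) ^ (l+1-(M-m))
          = acoef r m j * (1 / real (j + 1) * real ((j + 1) choose (j - l)) * bernoulli_plus (j - l)
              * real ((l + 1) choose (M - m)) * (-1) ^ (1 + l + m - M))"
        unfolding e cc_def by (simp only: ac_simps)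
    qed
  qed
  have "WW r M = (\<Sum>m=0..M. \<Sum>j<r. \<Sum>l=0..j. acoef r m j * cc j l * real ((l+1) choose (M-m)) * (-1) ^ (l+1-(M-m)))"
    unfolding WW_def
    by (rule sum.mono_neutral_cong_right) (use M in auto)
  also have "\<dots> = (\<Sum>y=0..M. \<Sum>j=M-y-1..r-1-y. acoef r y j * Dcoef r M j y)"
    by (rule sum.cong[OF refl], rule inner) auto
  finally show ?thesis using acoef_rec_zero[OF r M] by simp
qed

lemma coef_top': "1 \<le> r \<Longrightarrow> acoef (Suc r) r 0 = - WW r r"
  unfolding WW_def by (rule coef_top)

lemma WW_high: assumes "r < M" shows "WW r M = 0"
  unfolding WW_def
proof (intro sum.neutral ballI)
  fix m j l assume m: "m \<in> {..<r}" and j: "j \<in> {..<r}" and l: "l \<in> {0..j}"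
  show "(if m \<le> M then acoef r m j * cc j l * real ((l+1) choose (M-m)) * (-1) ^ (l+1-(M-m)) else 0) = 0"
  proof (cases "r \<le> m + j")
    case True then show ?thesis by (simp add: acoef_vanish)
  next
    case False
    then have "l + 1 < M - m" using l assms by auto
    then show ?thesis by simp
  qed
qed


lemma hyperharm_Suc: "1 \<le> r \<Longrightarrow> hyperharm p (Suc r) n = (\<Sum>i=1..n. hyperharm p r i)"
  by (cases r) auto

lemma P1_eq: assumes "m < r"
  shows "(\<Sum>j<r. acoef r m j * (\<Sum>l=0..j. cc j l * real n ^ (l+1) * X))
       = (\<Sum>l<r. (\<Sum>j<r. if l \<le> j then acoef r m j * cc j l else 0) * real n ^ (Suc l) * X)"
proof -
  have "(\<Sum>j<r. acoef r m j * (\<Sum>l=0..j. cc j l * real n ^ (l+1) * X))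
      = (\<Sum>j<r. \<Sum>l<r. if l \<le> j then acoef r m j * cc j l * real n ^ (Suc l) * X else 0)"
  proof (rule sum.cong[OF refl])
    fix j assume j: "j \<in> {..<r}"
    show "acoef r m j * (\<Sum>l=0..j. cc j l * real n ^ (l+1) * X)
        = (\<Sum>l<r. if l \<le> j then acoef r m j * cc j l * real n ^ (Suc l) * X else 0)"
      unfolding sum_distrib_left
      by (rule sum.mono_neutral_cong_left) (use j in \<open>auto simp: ac_simps\<close>)
  qed
  also have "\<dots> = (\<Sum>l<r. \<Sum>j<r. if l \<le> j then acoef r m j * cc j l * real n ^ (Suc l) * X else 0)"
    by (rule sum.swap)
  also have "\<dots> = (\<Sum>l<r. (\<Sum>j<r. if l \<le> j then acoef r m j * cc j l else 0) * real n ^ (Suc l) * X)"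
    unfolding sum_distrib_right by (intro sum.cong refl) simp
  finally show ?thesis .
qed

lemma shift_e: assumes "m + l + 1 < K"
  shows "(\<Sum>e=0..l+1. g e * real ((l+1) choose e) * (-1) ^ (l+1-e) * h (m + e))
       = (\<Sum>M<K. if m \<le> M then g (M - m) * real ((l+1) choose (M-m)) * (-1) ^ (l+1-(M-m)) * h M else 0)"
proof -
  have "(\<Sum>M<K. if m \<le> M then g (M - m) * real ((l+1) choose (M-m)) * (-1) ^ (l+1-(M-m)) * h M else 0)
      = (\<Sum>M=0+m..(l+1)+m. g (M - m) * real ((l+1) choose (M-m)) * (-1) ^ (l+1-(M-m)) * h M)"
    by (rule sum.mono_neutral_cong_right) (use assms in auto)
  also have "\<dots> = (\<Sum>e=0..l+1. g e * real ((l+1) choose e) * (-1) ^ (l+1-e) * h (m + e))"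
    by (subst sum.shift_bounds_cl_nat_ivl) (simp add: add.commute)
  finally show ?thesis by simp
qed


lemma hh_box: "1 \<le> r \<Longrightarrow> hyperharm p r n = (\<Sum>m<r. \<Sum>j<r. acoef r m j * real n ^ j * harm (int p - int m) n)"
proof (induction r arbitrary: n rule: nat_induct_at_least)
  case base
  then show ?case by simp
next
  case (Suc r)
  note r = \<open>1 \<le> r\<close>
  define hq where "hq M = harm (int p - int M) n" for M
  define F where "F m j l M = (if m \<le> M then acoef r m j * cc j l * real ((l+1) choose (M-m)) * (-1)^(l+1-(M-m)) * hq M else 0)" for m j l M
  have "hyperharm p (Suc r) n = (\<Sum>i=1..n. \<Sum>m<r. \<Sum>j<r. acoef r m j * (real i ^ j * harm (int p - int m) i))"
    using hyperharm_Suc[OF r] Suc.IH by (simp add: mult.assoc)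
  also have "\<dots> = (\<Sum>m<r. \<Sum>j<r. \<Sum>i=1..n. acoef r m j * (real i ^ j * harm (int p - int m) i))"
    by (subst sum.swap, rule sum.cong[OF refl], rule sum.swap)
  also have "\<dots> = (\<Sum>m<r. \<Sum>j<r. acoef r m j * (\<Sum>i=1..n. real i ^ j * harm (int p - int m) i))"
    by (simp add: sum_distrib_left)
  also have "\<dots> = (\<Sum>m<r. \<Sum>j<r. acoef r m j * (\<Sum>l=0..j. cc j l * real n ^ (l+1) * hq m))
                 - (\<Sum>m<r. \<Sum>j<r. acoef r m j * (\<Sum>l=0..j. \<Sum>e=0..l+1. cc j l * real ((l+1) choose e) * (-1) ^ (l+1-e) * hq (m + e)))"
    unfolding sumpow_harm hq_def by (simp add: right_diff_distrib sum_subtractf algebra_simps)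
  finally have split: "hyperharm p (Suc r) n = (\<Sum>m<r. \<Sum>j<r. acoef r m j * (\<Sum>l=0..j. cc j l * real n ^ (l+1) * hq m))
                 - (\<Sum>m<r. \<Sum>j<r. acoef r m j * (\<Sum>l=0..j. \<Sum>e=0..l+1. cc j l * real ((l+1) choose e) * (-1) ^ (l+1-e) * hq (m + e)))" .
  have P1: "(\<Sum>m<r. \<Sum>j<r. acoef r m j * (\<Sum>l=0..j. cc j l * real n ^ (l+1) * hq m))
      = (\<Sum>M<r. \<Sum>l<r. acoef (Suc r) M (Suc l) * real n ^ (Suc l) * hq M)"
  proof (rule sum.cong[OF refl])
    fix m assume m: "m \<in> {..<r}"
    show "(\<Sum>j<r. acoef r m j * (\<Sum>l=0..j. cc j l * real n ^ (l+1) * hq m))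
      = (\<Sum>l<r. acoef (Suc r) m (Suc l) * real n ^ (Suc l) * hq m)"
    proof -
      have mr: "m < r" using m by simp
      have "(\<Sum>j<r. acoef r m j * (\<Sum>l=0..j. cc j l * real n ^ (l+1) * hq m))
        = (\<Sum>l<r. (\<Sum>j<r. if l \<le> j then acoef r m j * cc j l else 0) * real n ^ (Suc l) * hq m)"
        by (rule P1_eq[OF mr])
      also have "\<dots> = (\<Sum>l<r. acoef (Suc r) m (Suc l) * real n ^ (Suc l) * hq m)"
        by (intro sum.cong refl) (simp add: coef_pos[OF r mr])
      finally show ?thesis .
    qed
  qed
  have P2a: "(\<Sum>m<r. \<Sum>j<r. acoef r m j * (\<Sum>l=0..j. \<Sum>e=0..l+1. cc j l * real ((l+1) choose e) * (-1) ^ (l+1-e) * hq (m + e)))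
      = (\<Sum>m<r. \<Sum>j<r. \<Sum>l=0..j. \<Sum>M<2*r. F m j l M)"
  proof (intro sum.cong refl)
    fix m j assume m: "m \<in> {..<r}" and j: "j \<in> {..<r}"
    have "acoef r m j * (\<Sum>l=0..j. \<Sum>e=0..l+1. cc j l * real ((l+1) choose e) * (-1) ^ (l+1-e) * hq (m + e))
      = (\<Sum>l=0..j. \<Sum>e=0..l+1. (\<lambda>_. acoef r m j * cc j l) e * real ((l+1) choose e) * (-1) ^ (l+1-e) * hq (m + e))"
      by (simp only: sum_distrib_left mult.assoc)
    also have "\<dots> = (\<Sum>l=0..j. \<Sum>M<2*r. F m j l M)"
    proof (rule sum.cong[OF refl])
      fix l assume l: "l \<in> {0..j}"
      have "m + l + 1 < 2 * r" using m j l by auto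
      from shift_e[OF this, of "\<lambda>_. acoef r m j * cc j l" hq]
      show "(\<Sum>e=0..l+1. (\<lambda>_. acoef r m j * cc j l) e * real ((l+1) choose e) * (-1) ^ (l+1-e) * hq (m + e))
          = (\<Sum>M<2*r. F m j l M)"
        unfolding F_def by simp
    qed
    finally show "acoef r m j * (\<Sum>l=0..j. \<Sum>e=0..l+1. cc j l * real ((l+1) choose e) * (-1) ^ (l+1-e) * hq (m + e))
      = (\<Sum>l=0..j. \<Sum>M<2*r. F m j l M)" .
  qed
  have P2b: "(\<Sum>m<r. \<Sum>j<r. \<Sum>l=0..j. \<Sum>M<2*r. F m j l M) = (\<Sum>M<2*r. WW r M * hq M)"
  proof -
    have "(\<Sum>m<r. \<Sum>j<r. \<Sum>l=0..j. \<Sum>M<2*r. F m j l M) = (\<Sum>m<r. \<Sum>j<r. \<Sum>M<2*r. \<Sum>l=0..j. F m j l M)"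
      by (rule sum.cong[OF refl], rule sum.cong[OF refl], rule sum.swap)
    also have "\<dots> = (\<Sum>m<r. \<Sum>M<2*r. \<Sum>j<r. \<Sum>l=0..j. F m j l M)"
      by (rule sum.cong[OF refl], rule sum.swap)
    also have "\<dots> = (\<Sum>M<2*r. \<Sum>m<r. \<Sum>j<r. \<Sum>l=0..j. F m j l M)"
      by (rule sum.swap)
    also have "\<dots> = (\<Sum>M<2*r. WW r M * hq M)"
      unfolding WW_def sum_distrib_right F_def by (intro sum.cong refl) simp
    finally show ?thesis .
  qed
  have Q0: "(\<Sum>M<Suc r. acoef (Suc r) M 0 * hq M) = - (\<Sum>M<2*r. WW r M * hq M)"
  proof -
    have "(\<Sum>M<Suc r. acoef (Suc r) M 0 * hq M) = (\<Sum>M<Suc r. - (WW r M * hq M))"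
    proof (rule sum.cong[OF refl])
      fix M assume "M \<in> {..<Suc r}"
      then have "M < r \<or> M = r" by auto
      then show "acoef (Suc r) M 0 * hq M = - (WW r M * hq M)"
        using coef_low[OF r] coef_top'[OF r] by auto
    qed
    also have "\<dots> = - (\<Sum>M<2*r. WW r M * hq M)"
      unfolding sum_negf
      by (rule arg_cong[where f=uminus], rule sum.mono_neutral_cong_left) (use r in \<open>auto simp: WW_high\<close>)
    finally show ?thesis .
  qed
  have Q1: "(\<Sum>M<Suc r. \<Sum>l<r. acoef (Suc r) M (Suc l) * real n ^ (Suc l) * hq M)
      = (\<Sum>M<r. \<Sum>l<r. acoef (Suc r) M (Suc l) * real n ^ (Suc l) * hq M)"
    by (simp add: acoef_vanish)
  have "(\<Sum>M<Suc r. \<Sum>L<Suc r. acoef (Suc r) M L * real n ^ L * harm (int p - int M) n)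
      = (\<Sum>M<Suc r. acoef (Suc r) M 0 * hq M + (\<Sum>l<r. acoef (Suc r) M (Suc l) * real n ^ (Suc l) * hq M))"
    unfolding hq_def by (intro sum.cong refl, subst sum.lessThan_Suc_shift) simp
  also have "\<dots> = (\<Sum>M<Suc r. acoef (Suc r) M 0 * hq M) + (\<Sum>M<Suc r. \<Sum>l<r. acoef (Suc r) M (Suc l) * real n ^ (Suc l) * hq M)"
    by (rule sum.distrib)
  also have "\<dots> = hyperharm p (Suc r) n"
    unfolding split P1 P2a P2b Q0 Q1 by simp
  finally show ?case by simp
qed


lemma Qk: "(x::real) > 0 \<Longrightarrow> (\<Sum>r\<le>k. (-1)^r * real (k choose r) / (x + real r)) = fact k / pochhammer x (Suc k)"
proof (induction k arbitrary: x)
  case 0 then show ?case by simp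
next
  case (Suc k)
  have x1: "x + 1 > 0" using Suc.prems by simp
  have A: "(\<Sum>r\<le>Suc k. (-1)^r * real (Suc k choose r) / (x + real r))
      = 1 / x + (\<Sum>r\<le>k. (-1)^(Suc r) * real (Suc k choose Suc r) / (x + real (Suc r)))"
    by (subst sum.atMost_Suc_shift) simp
  have B: "(\<Sum>r\<le>k. (-1)^(Suc r) * real (Suc k choose Suc r) / (x + real (Suc r)))
      = (\<Sum>r\<le>k. (-1)^(Suc r) * real (k choose Suc r) / (x + real (Suc r)))
        - (\<Sum>r\<le>k. (-1)^r * real (k choose r) / ((x + 1) + real r))"
    unfolding sum_subtractf[symmetric]
  proof (rule sum.cong[OF refl])
    fix r
    have d: "x + real (Suc r) \<noteq> 0" "x + 1 + real r \<noteq> 0" using Suc.prems by (smt (verit) of_nat_0_le_iff)+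
    show "(-1)^(Suc r) * real (Suc k choose Suc r) / (x + real (Suc r))
      = (-1)^(Suc r) * real (k choose Suc r) / (x + real (Suc r)) - (-1)^r * real (k choose r) / ((x + 1) + real r)"
      using d by (simp add: divide_simps) (simp add: algebra_simps)
  qed
  have C: "1 / x + (\<Sum>r\<le>k. (-1)^(Suc r) * real (k choose Suc r) / (x + real (Suc r)))
      = (\<Sum>r\<le>k. (-1)^r * real (k choose r) / (x + real r))"
  proof -
    have "(\<Sum>r\<le>Suc k. (-1)^r * real (k choose r) / (x + real r)) = 1 / x + (\<Sum>r\<le>k. (-1)^(Suc r) * real (k choose Suc r) / (x + real (Suc r)))"
      by (subst sum.atMost_Suc_shift) simp
    moreover have "(\<Sum>r\<le>Suc k. (-1)^r * real (k choose r) / (x + real r)) = (\<Sum>r\<le>k. (-1)^r * real (k choose r) / (x + real r))"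
      by simp
    ultimately show ?thesis by simp
  qed
  have "(\<Sum>r\<le>Suc k. (-1)^r * real (Suc k choose r) / (x + real r))
     = (\<Sum>r\<le>k. (-1)^r * real (k choose r) / (x + real r)) - (\<Sum>r\<le>k. (-1)^r * real (k choose r) / ((x + 1) + real r))"
    unfolding A B C[symmetric] by simp
  also have "\<dots> = fact k / pochhammer x (Suc k) - fact k / pochhammer (x + 1) (Suc k)"
    using Suc.IH[OF Suc.prems] Suc.IH[OF x1] by simp
  also have "\<dots> = fact (Suc k) / pochhammer x (Suc (Suc k))"
  proof -
    have p1: "pochhammer x (Suc (Suc k)) = pochhammer x (Suc k) * (x + real (Suc k))"
      by (simp only: pochhammer_Suc of_nat_Suc)
    have p2: "pochhammer x (Suc (Suc k)) = x * pochhammer (x + 1) (Suc k)"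
      by (rule pochhammer_rec)
    have nz1: "pochhammer x (Suc k) \<noteq> 0" using Suc.prems by (simp add: pochhammer_eq_0_iff)
    have nz2: "pochhammer (x+1) (Suc k) \<noteq> 0" using x1 by (simp add: pochhammer_eq_0_iff)
    have nz: "pochhammer x (Suc (Suc k)) \<noteq> 0" using p2 nz2 Suc.prems by simp
    have "fact k / pochhammer x (Suc k) = fact k * (x + real (Suc k)) / pochhammer x (Suc (Suc k))"
    proof -
      have "x + real (Suc k) \<noteq> 0" using Suc.prems by (smt (verit) of_nat_0_le_iff)
      then have "fact k / pochhammer x (Suc k) = fact k * (x + real (Suc k)) / (pochhammer x (Suc k) * (x + real (Suc k)))"
        by simp
      then show ?thesis unfolding p1 .
    qed
    moreover have "fact k / pochhammer (x + 1) (Suc k) = fact k * x / pochhammer x (Suc (Suc k))"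
      using p2 nz2 Suc.prems by (simp add: field_simps)
    ultimately show ?thesis by (simp add: field_simps diff_divide_distrib[symmetric])
  qed
  finally show ?case .
qed

lemma inv_binom: assumes k: "k \<ge> 1"
  shows "1 / real ((Suc n + k) choose k) = (\<Sum>r=1..k. (-1)^(r+1) * real r * real (k choose r) / (real (Suc n) + real r))"
proof -
  let ?x = "real (Suc n)"
  have x: "?x > 0" by simp
  have b: "real ((Suc n + k) choose k) = pochhammer (?x + 1) k / fact k"
    by (simp add: binomial_gbinomial gbinomial_pochhammer' of_nat_add)
  have pn: "pochhammer (?x + 1) k \<noteq> 0" by (simp add: pochhammer_eq_0_iff)
  have lhs: "1 / real ((Suc n + k) choose k) = ?x * (fact k / pochhammer ?x (Suc k))"
  proof -
    have "?x * (fact k / pochhammer ?x (Suc k)) = fact k / pochhammer (?x+1) k"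
      unfolding pochhammer_rec using x by simp
    then show ?thesis unfolding b by simp
  qed
  have "(\<Sum>r=1..k. (-1)^(r+1) * real r * real (k choose r) / (?x + real r))
      = (\<Sum>r\<le>k. (-1)^(r+1) * real r * real (k choose r) / (?x + real r))"
    by (simp add: atMost_atLeast0 sum.atLeast_Suc_atMost)
  also have "\<dots> = (\<Sum>r\<le>k. (-1)^(r+1) * real (k choose r) + ?x * ((-1)^r * real (k choose r) / (?x + real r)))"
  proof (rule sum.cong[OF refl])
    fix r assume "r \<in> {..k}"
    have d: "?x + real r \<noteq> 0" by (smt (verit) of_nat_0_le_iff x)
    show "(-1)^(r+1) * real r * real (k choose r) / (?x + real r)
        = (-1)^(r+1) * real (k choose r) + ?x * ((-1)^r * real (k choose r) / (?x + real r))"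
      using d by (simp add: field_simps)
  qed
  also have "\<dots> = - (\<Sum>r\<le>k. (-1)^r * real (k choose r)) + ?x * (\<Sum>r\<le>k. (-1)^r * real (k choose r) / (?x + real r))"
    by (simp only: sum.distrib sum_distrib_left sum_negf[symmetric], simp)
  also have "\<dots> = ?x * (fact k / pochhammer ?x (Suc k))"
    using choose_alternating_sum[of k] k Qk[OF x, of k] by simp
  finally show ?thesis using lhs by simp
qed


definition Cz :: real where "Cz = (\<Sum>j. real (Suc j) powr (-5/4))"

lemma summable_powr_Suc: "s < -1 \<Longrightarrow> summable (\<lambda>j. real (Suc j) powr s)"
  using summable_real_powr_iff[of s] summable_Suc_iff[of "\<lambda>j. real j powr s"] by simp

lemma sum_le_Cz: "(\<Sum>j=1..N. real j powr (-5/4)) \<le> Cz"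
proof -
  have "(\<Sum>j=1..N. real j powr (-5/4)) = (\<Sum>j<N. real (Suc j) powr (-5/4))"
    by (simp add: sum.atLeast1_atMost_eq)
  also have "\<dots> \<le> Cz" unfolding Cz_def
    using summable_powr_Suc[of "-5/4"] by (intro sum_le_suminf) auto
  finally show ?thesis .
qed

lemma harm_nonneg: "harm q N \<ge> 0"
  unfolding harm_def by (intro sum_nonneg) simp

lemma harm_bound: assumes p: "p \<ge> 1"
  shows "harm (int p - int l) N \<le> Cz * real N powr (real l + 1/4)"
proof -
  have t: "real j powi (- (int p - int l)) \<le> real N powr (real l + 1/4) * real j powr (-5/4)"
    if j: "j \<in> {1..N}" for j
  proof -
    have j1: "real j \<ge> 1" using j by simp
    have "real j powi (- (int p - int l)) = real j powr (real l - real p)"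
      using powr_real_of_int'[of "real j" "- (int p - int l)"] j1 by simp
    also have "\<dots> \<le> real j powr (real l - 1)"
      using j1 p by (intro powr_mono) auto
    also have "\<dots> = real j powr (real l + 1/4) * real j powr (-5/4)"
      by (simp add: powr_add[symmetric])
    also have "\<dots> \<le> real N powr (real l + 1/4) * real j powr (-5/4)"
      using j by (intro mult_right_mono powr_mono2) auto
    finally show ?thesis .
  qed
  have "harm (int p - int l) N \<le> (\<Sum>j=1..N. real N powr (real l + 1/4) * real j powr (-5/4))"
    unfolding harm_def by (rule sum_mono) (rule t)
  also have "\<dots> = real N powr (real l + 1/4) * (\<Sum>j=1..N. real j powr (-5/4))"
    by (simp add: sum_distrib_left)
  also have "\<dots> \<le> real N powr (real l + 1/4) * Cz"
    by (intro mult_left_mono sum_le_Cz) simp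
  finally show ?thesis by (simp add: mult.commute)
qed

lemma T_summable:
  assumes p1: "p1 \<ge> 1" and p2: "p2 \<ge> 1" and u: "u \<ge> l1 + l2 + 1"
  shows "summable (\<lambda>n. (-1) ^ (Suc n + 1) * harm (int p1 - int l1) (Suc n) * harm (int p2 - int l2) (Suc n)
                          / (real (Suc n) ^ u * real (Suc n + r)))"
proof (rule summable_comparison_test')
  show "summable (\<lambda>n. Cz * Cz * real (Suc n) powr (-3/2))"
    by (intro summable_mult summable_powr_Suc) simp
  fix n :: nat
  let ?N = "real (Suc n)"
  have N1: "?N \<ge> 1" by simp
  have h1: "0 \<le> harm (int p1 - int l1) (Suc n)" "harm (int p1 - int l1) (Suc n) \<le> Cz * ?N powr (real l1 + 1/4)"
    by (rule harm_nonneg, rule harm_bound[OF p1])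
  have h2: "0 \<le> harm (int p2 - int l2) (Suc n)" "harm (int p2 - int l2) (Suc n) \<le> Cz * ?N powr (real l2 + 1/4)"
    by (rule harm_nonneg, rule harm_bound[OF p2])
  have Cz0: "Cz \<ge> 0" unfolding Cz_def
    by (rule suminf_nonneg) (use summable_powr_Suc[of "-5/4"] in auto)
  have apos: "?N ^ u * real (Suc n + r) > 0" by simp
  have den: "?N powr (real u + 1) \<le> ?N ^ u * real (Suc n + r)"
  proof -
    have "?N powr (real u + 1) = ?N ^ u * ?N" by (simp add: powr_add powr_realpow)
    also have "\<dots> \<le> ?N ^ u * real (Suc n + r)" by (intro mult_left_mono) auto
    finally show ?thesis .
  qed
  have dpos: "?N powr (real u + 1) > 0" by simp
  have "norm ((-1) ^ (Suc n + 1) * harm (int p1 - int l1) (Suc n) * harm (int p2 - int l2) (Suc n)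
                          / (?N ^ u * real (Suc n + r)))
      = harm (int p1 - int l1) (Suc n) * harm (int p2 - int l2) (Suc n) / (?N ^ u * real (Suc n + r))"
    using h1 h2 by (simp add: abs_mult)
  also have "\<dots> \<le> harm (int p1 - int l1) (Suc n) * harm (int p2 - int l2) (Suc n) / ?N powr (real u + 1)"
    by (rule divide_left_mono[OF den mult_nonneg_nonneg[OF h1(1) h2(1)] mult_pos_pos[OF apos dpos]])
  also have "\<dots> \<le> (Cz * ?N powr (real l1 + 1/4)) * (Cz * ?N powr (real l2 + 1/4)) / ?N powr (real u + 1)"
    by (rule divide_right_mono[OF mult_mono[OF h1(2) h2(2)]]) (use Cz0 h2(1) dpos in auto)
  also have "\<dots> = Cz * Cz * ?N powr ((real l1 + 1/4) + (real l2 + 1/4) - (real u + 1))"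
    unfolding powr_diff[of ?N "(real l1 + 1/4) + (real l2 + 1/4)" "real u + 1"]
      powr_add[of ?N "real l1 + 1/4" "real l2 + 1/4"] by (simp only: ac_simps times_divide_eq_right)
  also have "\<dots> \<le> Cz * Cz * ?N powr (-3/2)"
    using u Cz0 N1 by (intro mult_left_mono powr_mono) auto
  finally show "norm ((-1) ^ (Suc n + 1) * harm (int p1 - int l1) (Suc n) * harm (int p2 - int l2) (Suc n)
                          / (?N ^ u * real (Suc n + r))) \<le> Cz * Cz * ?N powr (-3/2)" .
qed


lemma hh_tri: "1 \<le> r \<Longrightarrow> hyperharm p r n = (\<Sum>l<r. \<Sum>t=0..r-1-l. acoef r l t * real n ^ t * harm (int p - int l) n)"
  unfolding hh_box
  by (intro sum.cong refl sum.mono_neutral_cong_right) (auto simp: acoef_vanish)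

lemma sd: "(\<Sum>i\<in>A. \<Sum>j\<in>B i. x i j) * (Y::real) = (\<Sum>i\<in>A. \<Sum>j\<in>B i. x i j * Y)"
  by (simp add: sum_distrib_right)

lemma sd': "(Y::real) * (\<Sum>i\<in>A. \<Sum>j\<in>B i. x i j) = (\<Sum>i\<in>A. \<Sum>j\<in>B i. Y * x i j)"
  by (simp add: sum_distrib_left)

theorem theorem4:
  fixes s1 s2 p1 p2 m k :: nat
  assumes "s1 \<ge> 1" "s2 \<ge> 1" "p1 \<ge> 1" "p2 \<ge> 1" "m \<ge> 1" "k \<ge> 1"
    and "m \<ge> s1 + s2 - 1"
  shows "(\<Sum>n. (-1) ^ (Suc n + 1) * hyperharm p1 s1 (Suc n) * hyperharm p2 s2 (Suc n)
              / (real (Suc n) ^ m * real ((Suc n + k) choose k)))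
       = (\<Sum>l1 < s1. \<Sum>t1 = 0 .. s1 - 1 - l1. \<Sum>l2 < s2. \<Sum>t2 = 0 .. s2 - 1 - l2.
            acoef s1 l1 t1 * acoef s2 l2 t2 *
            (\<Sum>r = 1 .. k. (-1) ^ (r + 1) * real r * real (k choose r)
               * Tsum (int p1 - int l1) (int p2 - int l2) (m - t1 - t2) r))"
proof -
  note s1 = assms(1) and s2 = assms(2) and p1 = assms(3) and p2 = assms(4) and k = assms(6) and ms = assms(7)
  define Tt where "Tt l1 l2 u r n = (-1) ^ (Suc n + 1) * harm (int p1 - int l1) (Suc n) * harm (int p2 - int l2) (Suc n)
                          / (real (Suc n) ^ u * real (Suc n + r))" for l1 l2 u r n
  have uu: "m - t1 - t2 \<ge> l1 + l2 + 1" "t1 + t2 \<le> m"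
    if "l1 < s1" "t1 \<in> {0..s1-1-l1}" "l2 < s2" "t2 \<in> {0..s2-1-l2}" for l1 t1 l2 t2
    using that ms by auto
  have sums: "(\<lambda>n. \<Sum>l1 < s1. \<Sum>t1 = 0 .. s1 - 1 - l1. \<Sum>l2 < s2. \<Sum>t2 = 0 .. s2 - 1 - l2.
            acoef s1 l1 t1 * acoef s2 l2 t2 *
            (\<Sum>r = 1 .. k. (-1) ^ (r + 1) * real r * real (k choose r) * Tt l1 l2 (m - t1 - t2) r n))
     sums (\<Sum>l1 < s1. \<Sum>t1 = 0 .. s1 - 1 - l1. \<Sum>l2 < s2. \<Sum>t2 = 0 .. s2 - 1 - l2.
            acoef s1 l1 t1 * acoef s2 l2 t2 *
            (\<Sum>r = 1 .. k. (-1) ^ (r + 1) * real r * real (k choose r)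
               * Tsum (int p1 - int l1) (int p2 - int l2) (m - t1 - t2) r))"
  proof (intro sums_sum sums_mult)
    fix l1 t1 l2 t2 r
    assume "l1 \<in> {..<s1}" "t1 \<in> {0..s1-1-l1}" "l2 \<in> {..<s2}" "t2 \<in> {0..s2-1-l2}"
    then have u: "m - t1 - t2 \<ge> l1 + l2 + 1" using uu by auto
    show "(\<lambda>n. Tt l1 l2 (m - t1 - t2) r n) sums Tsum (int p1 - int l1) (int p2 - int l2) (m - t1 - t2) r"
      unfolding Tsum_def Tt_def by (rule summable_sums[OF T_summable[OF p1 p2 u]])
  qed
  have pt: "(-1) ^ (Suc n + 1) * hyperharm p1 s1 (Suc n) * hyperharm p2 s2 (Suc n)
              / (real (Suc n) ^ m * real ((Suc n + k) choose k))
      = (\<Sum>l1 < s1. \<Sum>t1 = 0 .. s1 - 1 - l1. \<Sum>l2 < s2. \<Sum>t2 = 0 .. s2 - 1 - l2.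
            acoef s1 l1 t1 * acoef s2 l2 t2 *
            (\<Sum>r = 1 .. k. (-1) ^ (r + 1) * real r * real (k choose r) * Tt l1 l2 (m - t1 - t2) r n))" for n
  proof -
    let ?N = "real (Suc n)"
    let ?c = "(-1) ^ (Suc n + 1) / (?N ^ m * real ((Suc n + k) choose k))"
    have "(-1) ^ (Suc n + 1) * hyperharm p1 s1 (Suc n) * hyperharm p2 s2 (Suc n)
              / (real (Suc n) ^ m * real ((Suc n + k) choose k))
        = (\<Sum>l1 < s1. \<Sum>t1 = 0 .. s1 - 1 - l1. \<Sum>l2 < s2. \<Sum>t2 = 0 .. s2 - 1 - l2.
            (acoef s1 l1 t1 * ?N ^ t1 * harm (int p1 - int l1) (Suc n)) *
            (acoef s2 l2 t2 * ?N ^ t2 * harm (int p2 - int l2) (Suc n)) * ?c)"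
    proof -
      define X where "X l1 t1 = acoef s1 l1 t1 * ?N ^ t1 * harm (int p1 - int l1) (Suc n)" for l1 t1
      define Z where "Z l2 t2 = acoef s2 l2 t2 * ?N ^ t2 * harm (int p2 - int l2) (Suc n)" for l2 t2
      define H2 where "H2 = (\<Sum>l2 < s2. \<Sum>t2 = 0 .. s2 - 1 - l2. Z l2 t2)"
      define cc where "cc = ?c"
      have "(-1) ^ (Suc n + 1) * hyperharm p1 s1 (Suc n) * hyperharm p2 s2 (Suc n)
              / (real (Suc n) ^ m * real ((Suc n + k) choose k))
          = (\<Sum>l1 < s1. \<Sum>t1 = 0 .. s1 - 1 - l1. X l1 t1) * (H2 * cc)"
        unfolding hh_tri[OF s1] hh_tri[OF s2] X_def H2_def Z_def cc_def by simp
      also have "\<dots> = (\<Sum>l1 < s1. \<Sum>t1 = 0 .. s1 - 1 - l1. X l1 t1 * (H2 * cc))"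
        by (rule sd)
      also have "\<dots> = (\<Sum>l1 < s1. \<Sum>t1 = 0 .. s1 - 1 - l1. X l1 t1 * (\<Sum>l2 < s2. \<Sum>t2 = 0 .. s2 - 1 - l2. Z l2 t2 * cc))"
        unfolding H2_def sd ..
      also have "\<dots> = (\<Sum>l1 < s1. \<Sum>t1 = 0 .. s1 - 1 - l1. \<Sum>l2 < s2. \<Sum>t2 = 0 .. s2 - 1 - l2. X l1 t1 * (Z l2 t2 * cc))"
        unfolding sd' ..
      finally show ?thesis unfolding X_def Z_def cc_def by (simp only: mult.assoc)
    qed
    also have "\<dots> = (\<Sum>l1 < s1. \<Sum>t1 = 0 .. s1 - 1 - l1. \<Sum>l2 < s2. \<Sum>t2 = 0 .. s2 - 1 - l2.
            acoef s1 l1 t1 * acoef s2 l2 t2 *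
            (\<Sum>r = 1 .. k. (-1) ^ (r + 1) * real r * real (k choose r) * Tt l1 l2 (m - t1 - t2) r n))"
    proof (intro sum.cong refl)
      fix l1 t1 l2 t2
      assume a: "l1 \<in> {..<s1}" "t1 \<in> {0..s1-1-l1}" "l2 \<in> {..<s2}" "t2 \<in> {0..s2-1-l2}"
      then have tm: "t1 + t2 \<le> m" using uu by auto
      define u where "u = m - t1 - t2"
      have mu: "m = u + t1 + t2" using tm u_def by simp
      define h1 where "h1 = harm (int p1 - int l1) (Suc n)"
      define h2 where "h2 = harm (int p2 - int l2) (Suc n)"
      have Np: "?N ^ u \<noteq> 0" by simp
      have "(\<Sum>r = 1 .. k. (-1) ^ (r + 1) * real r * real (k choose r) * Tt l1 l2 u r n)
          = (-1) ^ (Suc n + 1) * h1 * h2 / ?N ^ u * (\<Sum>r = 1 .. k. (-1) ^ (r + 1) * real r * real (k choose r) / (?N + real r))"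
        unfolding Tt_def sum_distrib_left h1_def h2_def
        by (intro sum.cong refl) (simp add: field_simps)
      also have "\<dots> = (-1) ^ (Suc n + 1) * h1 * h2 / ?N ^ u / real ((Suc n + k) choose k)"
        unfolding inv_binom[OF k, symmetric] by simp
      finally have r: "(\<Sum>r = 1 .. k. (-1) ^ (r + 1) * real r * real (k choose r) * Tt l1 l2 u r n)
          = (-1) ^ (Suc n + 1) * h1 * h2 / ?N ^ u / real ((Suc n + k) choose k)" .
      show "(acoef s1 l1 t1 * ?N ^ t1 * harm (int p1 - int l1) (Suc n)) *
            (acoef s2 l2 t2 * ?N ^ t2 * harm (int p2 - int l2) (Suc n)) * ?c
          = acoef s1 l1 t1 * acoef s2 l2 t2 *
            (\<Sum>r = 1 .. k. (-1) ^ (r + 1) * real r * real (k choose r) * Tt l1 l2 (m - t1 - t2) r n)"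
        unfolding u_def[symmetric] r unfolding mu h1_def[symmetric] h2_def[symmetric]
        by (simp add: power_add field_simps)
    qed
    finally show ?thesis .
  qed
  show ?thesis
    unfolding pt using sums by (rule sums_unique[symmetric])
qed

end
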